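(* Let $G$ be a finite simple graph that contains a subdivision of $K_4^-$ as a subgraph. Then $S(G)$ contains a subdivision of $K_{3,3}$ as a subgraph.
   Context: $K_4^-$ denotes the complete graph $K_4$ with one edge removed (the diamond graph). A subdivision of a graph $F$ is a graph obtained from $F$ by replacing edges with internally vertex-disjoint paths. For a graph $G$, the great shadow $S(G)$ is the graph obtained from $G$ by adding, for each vertex $v$ of $G$, a new vertex $v'$ (the shadow vertex of $v$) and making $v'$ adjacent to $v$ and to every neighbor of $v$ in $G$; no other edges are added. *)

theory Defs
  imports Main
begin

definition simple_graph :: "'a set \<Rightarrow> ('a \<Rightarrow> 'a \<Rightarrow> bool) \<Rightarrow> bool" where
  "simple_graph V E \<longleftrightarrow> finite V \<and>
     (\<forall>u v. E u v \<longrightarrow> u \<in> V \<and> v \<in> V \<and> u \<noteq> v \<and> E v u)"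

definition path_in :: "'a set \<Rightarrow> ('a \<Rightarrow> 'a \<Rightarrow> bool) \<Rightarrow> 'a list \<Rightarrow> bool" where
  "path_in V E p \<longleftrightarrow> p \<noteq> [] \<and> distinct p \<and> set p \<subseteq> V \<and>
     (\<forall>i. Suc i < length p \<longrightarrow> E (p ! i) (p ! Suc i))"

definition has_subdivision ::
  "'b set \<Rightarrow> ('b \<Rightarrow> 'b \<Rightarrow> bool) \<Rightarrow> 'a set \<Rightarrow> ('a \<Rightarrow> 'a \<Rightarrow> bool) \<Rightarrow> bool" where
  "has_subdivision VH EH VG EG \<longleftrightarrow>
     (\<exists>f P. inj_on f VH \<and> f ` VH \<subseteq> VG \<and>
        (\<forall>u v. EH u v \<longrightarrow> path_in VG EG (P u v) \<and> hd (P u v) = f u \<and> last (P u v) = f v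
             \<and> P v u = rev (P u v) \<and> set (P u v) \<inter> f ` VH = {f u, f v}) \<and>
        (\<forall>u v x y. EH u v \<and> EH x y \<and> {u, v} \<noteq> {x, y} \<longrightarrow>
             set (P u v) \<inter> set (P x y) \<subseteq> f ` VH))"

definition K4m_V :: "nat set" where "K4m_V = {0..3}"
definition K4m_E :: "nat \<Rightarrow> nat \<Rightarrow> bool" where
  "K4m_E u v \<longleftrightarrow> u \<in> K4m_V \<and> v \<in> K4m_V \<and> u \<noteq> v \<and> {u, v} \<noteq> {2, 3}"

definition K33_V :: "nat set" where "K33_V = {0..5}"
definition K33_E :: "nat \<Rightarrow> nat \<Rightarrow> bool" where
  "K33_E u v \<longleftrightarrow> (u < 3 \<and> 3 \<le> v \<and> v < 6) \<or> (v < 3 \<and> 3 \<le> u \<and> u < 6)"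

text \<open>Great shadow: (v,False) is the original vertex v, (v,True) is its shadow v'.
  v' is adjacent to v and to all neighbours of v; shadows are pairwise nonadjacent.\<close>
definition shadow_V :: "'a set \<Rightarrow> ('a \<times> bool) set" where
  "shadow_V V = V \<times> UNIV"
definition shadow_E :: "'a set \<Rightarrow> ('a \<Rightarrow> 'a \<Rightarrow> bool) \<Rightarrow> 'a \<times> bool \<Rightarrow> 'a \<times> bool \<Rightarrow> bool" where
  "shadow_E V E x y \<longleftrightarrow>
     (\<not> snd x \<and> \<not> snd y \<and> E (fst x) (fst y)) \<or>
     (snd x \<and> \<not> snd y \<and> (E (fst x) (fst y) \<or> (fst x = fst y \<and> fst x \<in> V))) \<or>
     (\<not> snd x \<and> snd y \<and> (E (fst y) (fst x) \<or> (fst x = fst y \<and> fst x \<in> V)))"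

end

theory Submission
  imports Defs
begin


definition lift :: "(nat \<Rightarrow> bool) \<Rightarrow> 'a list \<Rightarrow> ('a \<times> bool) list" where
  "lift g p = map (\<lambda>i. (p ! i, g i)) [0..<length p]"

lemma lift_length[simp]: "length (lift g p) = length p"
  by (simp add: lift_def)
lemma lift_nth[simp]: "i < length p \<Longrightarrow> lift g p ! i = (p ! i, g i)"
  by (simp add: lift_def)
lemma map_fst_lift[simp]: "map fst (lift g p) = p"
  by (rule nth_equalityI) (auto simp: lift_def)
lemma lift_nil[simp]: "lift g p = [] \<longleftrightarrow> p = []"
  by (simp add: lift_def)
lemma hd_lift: "p \<noteq> [] \<Longrightarrow> hd (lift g p) = (hd p, g 0)"
  by (simp add: hd_conv_nth)
lemma last_lift: "p \<noteq> [] \<Longrightarrow> last (lift g p) = (last p, g (length p - 1))"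
  by (simp add: last_conv_nth)
lemma set_lift: "set (lift g p) = {(p!i, g i) | i. i < length p}"
  by (auto simp: lift_def)
lemma set_lift_sub: "set (lift g p) \<subseteq> set p \<times> UNIV"
  by (auto simp: set_lift)
lemma distinct_lift: "distinct p \<Longrightarrow> distinct (lift g p)"
  by (metis distinct_map map_fst_lift)

lemma lift_disj:
  assumes "distinct p" "\<forall>i<length p. g i \<noteq> h i"
  shows "set (lift g p) \<inter> set (lift h p) = {}"
  using assms by (auto simp: set_lift nth_eq_iff_index_eq)

lemma lift_ends:
  assumes "distinct p" "p \<noteq> []" "set p \<inter> Y = {hd p, last p}"
  shows "set (lift g p) \<inter> (Y \<times> UNIV) = {hd (lift g p), last (lift g p)}"
proof
  show "{hd (lift g p), last (lift g p)} \<subseteq> set (lift g p) \<inter> (Y \<times> UNIV)"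
    using assms hd_in_set[of "lift g p"] last_in_set[of "lift g p"] by (auto simp: hd_lift last_lift)
  show "set (lift g p) \<inter> (Y \<times> UNIV) \<subseteq> {hd (lift g p), last (lift g p)}"
  proof
    fix x assume x: "x \<in> set (lift g p) \<inter> (Y \<times> UNIV)"
    then obtain i where i: "i < length p" "x = (p!i, g i)" by (auto simp: set_lift)
    have "p!i \<in> {hd p, last p}" using assms(3) x i nth_mem by blast
    then have "p!i = p!0 \<or> p!i = p!(length p - 1)"
      using assms(2) by (simp add: hd_conv_nth last_conv_nth)
    then have "i = 0 \<or> i = length p - 1"
      using assms(1,2) i(1) by (auto simp: nth_eq_iff_index_eq)
    then show "x \<in> {hd (lift g p), last (lift g p)}"
      using i assms(2) by (auto simp: hd_conv_nth last_conv_nth)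
  qed
qed

lemma shadow_sym:
  assumes "simple_graph V E" "shadow_E V E x y" shows "shadow_E V E y x"
proof -
  have s: "\<And>u v. E u v \<Longrightarrow> E v u" using assms(1) by (auto simp: simple_graph_def)
  show ?thesis using assms(2) unfolding shadow_E_def by (cases "snd x"; cases "snd y") (auto intro: s)
qed

lemma path_rev:
  assumes "\<And>x y. EE x y \<Longrightarrow> EE y x" "path_in VV EE p"
  shows "path_in VV EE (rev p)"
  unfolding path_in_def
proof (intro conjI allI impI)
  show "rev p \<noteq> []" "distinct (rev p)" "set (rev p) \<subseteq> VV" using assms(2) by (auto simp: path_in_def)
  fix i assume i: "Suc i < length (rev p)"
  let ?n = "length p"
  have "EE (p ! (?n - Suc (Suc i))) (p ! Suc (?n - Suc (Suc i)))"
    using assms(2) i unfolding path_in_def by auto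
  moreover have "Suc (?n - Suc (Suc i)) = ?n - Suc i" using i by simp
  ultimately show "EE (rev p ! i) (rev p ! Suc i)"
    using i assms(1) by (simp add: rev_nth)
qed

lemma lift_path:
  assumes sg: "simple_graph V E" and p: "path_in V E p"
    and g: "\<forall>i. Suc i < length p \<longrightarrow> \<not> (g i \<and> g (Suc i))"
  shows "path_in (shadow_V V) (shadow_E V E) (lift g p)"
  unfolding path_in_def
proof (intro conjI allI impI)
  show "lift g p \<noteq> []" "distinct (lift g p)" using p by (auto simp: path_in_def distinct_lift)
  show "set (lift g p) \<subseteq> shadow_V V" using p set_lift_sub[of g p]
    by (auto simp: path_in_def shadow_V_def)
  fix i assume i: "Suc i < length (lift g p)"
  have e: "E (p!i) (p!Suc i)" "E (p!Suc i) (p!i)" using p i sg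
    by (auto simp: path_in_def simple_graph_def)
  show "shadow_E V E (lift g p ! i) (lift g p ! Suc i)"
    using i e g by (auto simp: shadow_E_def)
qed

lemma path_append:
  assumes p: "path_in V E p" and q: "path_in V E q" and l: "last p = hd q"
    and dj: "set p \<inter> set q \<subseteq> {hd q}"
  shows "path_in V E (p @ tl q)"
proof -
  obtain x q' where qx: "q = x # q'" using q by (cases q) (auto simp: path_in_def)
  have pne: "p \<noteq> []" using p by (simp add: path_in_def)
  have xl: "last p = x" using l qx by simp
  have dq: "distinct (x # q')" using q qx by (simp add: path_in_def)
  have dis: "distinct (p @ q')"
    using p dq dj qx by (auto simp: path_in_def)
  have sub: "set (p @ q') \<subseteq> V" using p q qx by (auto simp: path_in_def)
  have ed: "E ((p @ q') ! i) ((p @ q') ! Suc i)" if i: "Suc i < length (p @ q')" for i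
  proof -
    consider "Suc i < length p" | "Suc i = length p" | "Suc i > length p" by linarith
    then show ?thesis
    proof cases
      case 1 then show ?thesis using p by (simp add: path_in_def nth_append)
    next
      case 2
      have "p ! i = x" using 2 xl pne by (metis diff_Suc_1 last_conv_nth)
      moreover have "E ((x#q') ! 0) ((x#q') ! Suc 0)" using q qx i 2 by (auto simp: path_in_def)
      ultimately show ?thesis using 2 by (simp add: nth_append)
    next
      case 3
      define j where "j = i - length p"
      have ij: "i = length p + j" using 3 j_def by simp
      have "E ((x#q') ! Suc j) ((x#q') ! Suc (Suc j))" using q qx i ij by (auto simp: path_in_def)
      then show ?thesis using ij by (simp add: nth_append)
    qed
  qed
  show ?thesis using qx dis sub ed pne unfolding path_in_def by auto
qed



definition zz :: "bool \<Rightarrow> nat \<Rightarrow> bool" where "zz s i = (s = even i)"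

lemma stub_path: "x \<in> V \<Longrightarrow> path_in (shadow_V V) (shadow_E V E) [(x,s),(x,\<not>s)]"
  unfolding path_in_def by (auto simp: shadow_V_def shadow_E_def less_Suc_eq)

lemma zz_ok: "\<forall>i. Suc i < n \<longrightarrow> \<not> (zz s i \<and> zz s (Suc i))"
  by (auto simp: zz_def)

lemma rev_path_S: "simple_graph V E \<Longrightarrow> path_in (shadow_V V) (shadow_E V E) q
   \<Longrightarrow> path_in (shadow_V V) (shadow_E V E) (rev q)"
  by (rule path_rev) (auto intro: shadow_sym)

lemma supp_combine: "set q1 \<subseteq> S1 \<times> UNIV \<Longrightarrow> set q2 \<subseteq> S2 \<times> UNIV \<Longrightarrow> S1 \<inter> S2 \<subseteq> T
  \<Longrightarrow> set q1 \<inter> set q2 \<subseteq> T \<times> UNIV"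
  by auto

locale diam =
  fixes V :: "'a set" and E :: "'a \<Rightarrow> 'a \<Rightarrow> bool" and a b c d :: 'a
    and A B R D1 D2 :: "'a list"
  assumes sg: "simple_graph V E"
  and dab: "a \<noteq> b" and dac: "a \<noteq> c" and dad: "a \<noteq> d" and dbc: "b \<noteq> c"
  and dbd: "b \<noteq> d" and dcd: "c \<noteq> d"
  and pA: "path_in V E A" and hA: "hd A = a" and lA: "last A = c" and wA: "set A \<inter> {a,b,c,d} = {a,c}"
  and pB: "path_in V E B" and hB: "hd B = c" and lB: "last B = b" and wB: "set B \<inter> {a,b,c,d} = {c,b}"
  and pR: "path_in V E R" and hR: "hd R = a" and lR: "last R = b" and wR: "set R \<inter> {a,b,c,d} = {a,b}"
  and pD1: "path_in V E D1" and hD1: "hd D1 = a" and lD1: "last D1 = d" and wD1: "set D1 \<inter> {a,b,c,d} = {a,d}"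
  and pD2: "path_in V E D2" and hD2: "hd D2 = d" and lD2: "last D2 = b" and wD2: "set D2 \<inter> {a,b,c,d} = {d,b}"
  and iAB: "set A \<inter> set B \<subseteq> {a,b,c,d}" and iAR: "set A \<inter> set R \<subseteq> {a,b,c,d}"
  and iAD1: "set A \<inter> set D1 \<subseteq> {a,b,c,d}" and iAD2: "set A \<inter> set D2 \<subseteq> {a,b,c,d}"
  and iBR: "set B \<inter> set R \<subseteq> {a,b,c,d}"
  and iBD1: "set B \<inter> set D1 \<subseteq> {a,b,c,d}" and iBD2: "set B \<inter> set D2 \<subseteq> {a,b,c,d}"
  and iRD1: "set R \<inter> set D1 \<subseteq> {a,b,c,d}" and iRD2: "set R \<inter> set D2 \<subseteq> {a,b,c,d}"
  and iD12: "set D1 \<inter> set D2 \<subseteq> {a,b,c,d}"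
begin

lemma ne: "A \<noteq> []" "B \<noteq> []" "R \<noteq> []" "D1 \<noteq> []" "D2 \<noteq> []"
  using pA pB pR pD1 pD2 by (auto simp: path_in_def)

lemma dist: "distinct A" "distinct B" "distinct R" "distinct D1" "distinct D2"
  using pA pB pR pD1 pD2 by (auto simp: path_in_def)

lemma inV: "a \<in> V" "b \<in> V" "c \<in> V"
proof -
  have "hd A \<in> V" "last A \<in> V" "last B \<in> V" using pA pB ne hd_in_set last_in_set
    unfolding path_in_def by blast+
  then show "a \<in> V" "b \<in> V" "c \<in> V" using hA lA lB by auto
qed

definition "Dp = D1 @ tl D2"

lemma tlD2: "tl D2 \<noteq> []"
proof
  assume "tl D2 = []"
  then have "D2 = [hd D2]" using ne(5) by (cases D2) auto
  then show False using hD2 lD2 dbd by (metis last_ConsL)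
qed

lemma sDp: "set Dp = set D1 \<union> set D2"
proof -
  have "D2 = hd D2 # tl D2" using ne(5) by simp
  then have "set D2 = insert d (set (tl D2))" using hD2 by (metis list.simps(15))
  moreover have "d \<in> set D1" using lD1 ne(4) last_in_set by metis
  ultimately show ?thesis unfolding Dp_def by auto
qed

lemma pDp: "path_in V E Dp"
  unfolding Dp_def
proof (rule path_append[OF pD1 pD2])
  show "last D1 = hd D2" using lD1 hD2 by simp
  show "set D1 \<inter> set D2 \<subseteq> {hd D2}" using iD12 wD1 wD2 hD2 dab dad dbd by blast
qed

lemma hDp: "hd Dp = a" using ne hD1 by (simp add: Dp_def)
lemma lDp: "last Dp = b"
  using tlD2 ne lD2 by (simp add: Dp_def last_tl)
lemma dDp: "distinct Dp" using pDp by (simp add: path_in_def)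
lemma lenDp: "length Dp \<ge> 3"
proof -
  have "{a,b,d} \<subseteq> set Dp" using sDp wD1 wD2 by blast
  then have "card {a,b,d} \<le> card (set Dp)" by (simp add: card_mono)
  then show ?thesis using dDp dab dad dbd by (simp add: distinct_card)
qed

lemma eA: "set A \<inter> {a,b,c} = {hd A, last A}" using wA hA lA dab dbc dbd by blast
lemma eB: "set B \<inter> {a,b,c} = {hd B, last B}" using wB hB lB dab dac by blast
lemma eR: "set R \<inter> {a,b,c} = {hd R, last R}" using wR hR lR dac dbc by blast
lemma eDp: "set Dp \<inter> {a,b,c} = {hd Dp, last Dp}"
proof -
  have 1: "set D1 \<inter> {a,b,c} = {a}" using wD1 dab dac dbd dcd by auto
  have 2: "set D2 \<inter> {a,b,c} = {b}" using wD2 dab dbc dad dcd by auto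
  show ?thesis unfolding sDp hDp lDp using 1 2 by auto
qed


lemma lenR: "length R - 1 \<noteq> 0"
proof
  assume "length R - 1 = 0"
  then have "R = [hd R]" using ne(3) by (cases R) auto
  then show False using hR lR dab by (metis last_ConsL)
qed

definition "sc = even (length B - 1)"
definition "sa = (even (length A - 1) \<noteq> sc)"
definition "br = [(a,sa),(b,False),(c,sc),(a,\<not>sa),(b,True),(c,\<not>sc)]"
definition "q05 = lift (zz sa) A"
definition "q23 = rev (lift (zz (\<not>sa)) A)"
definition "q24 = lift (zz sc) B"
definition "q15 = rev (lift (zz (\<not>sc)) B)"
definition "q13 = rev (lift (\<lambda>i. i = 0 \<and> \<not>sa) R)"
definition "q04 = lift (\<lambda>i. (i = 0 \<and> sa) \<or> i = length Dp - 1) Dp"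
definition Q0 :: "nat \<Rightarrow> nat \<Rightarrow> ('a \<times> bool) list" where "Q0 u v = (if u=0 \<and> v=3 then [(a,sa),(a,\<not>sa)] else if u=1 \<and> v=4 then [(b,False),(b,True)]
  else if u=2 \<and> v=5 then [(c,sc),(c,\<not>sc)] else if u=0 \<and> v=5 then q05 else if u=2 \<and> v=3 then q23
  else if u=2 \<and> v=4 then q24 else if u=1 \<and> v=5 then q15 else if u=1 \<and> v=3 then q13 else q04)"

definition good :: "('a \<times> bool) list \<Rightarrow> 'a \<times> bool \<Rightarrow> 'a \<times> bool \<Rightarrow> bool" where
  "good q x y \<longleftrightarrow> path_in (shadow_V V) (shadow_E V E) q \<and> hd q = x \<and> last q = y
     \<and> set q \<inter> ({a,b,c} \<times> UNIV) = {x,y}"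

lemma g03: "good (Q0 0 3) (br!0) (br!3)"
  unfolding good_def Q0_def br_def using stub_path inV by auto
lemma g14: "good (Q0 1 4) (br!1) (br!4)"
  unfolding good_def Q0_def br_def using stub_path[of b V E False] inV by auto
lemma g25: "good (Q0 2 5) (br!2) (br!5)"
  unfolding good_def Q0_def br_def using stub_path inV by auto

lemma g05: "good q05 (br!0) (br!5)"
  unfolding good_def q05_def
proof (intro conjI)
  show "path_in (shadow_V V) (shadow_E V E) (lift (zz sa) A)" by (rule lift_path[OF sg pA zz_ok])
  show "hd (lift (zz sa) A) = br!0" using ne hA by (simp add: hd_lift br_def zz_def)
  show "last (lift (zz sa) A) = br!5" using ne lA by (simp add: last_lift br_def zz_def sa_def) (cases sc; auto)
  show "set (lift (zz sa) A) \<inter> ({a,b,c} \<times> UNIV) = {br!0, br!5}"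
    using lift_ends[OF dist(1) ne(1) eA, of "zz sa"] \<open>hd (lift (zz sa) A) = br!0\<close>
      \<open>last (lift (zz sa) A) = br!5\<close> by simp
qed

lemma g23: "good q23 (br!2) (br!3)"
  unfolding good_def q23_def
proof (intro conjI)
  show "path_in (shadow_V V) (shadow_E V E) (rev (lift (zz (\<not>sa)) A))"
    by (rule rev_path_S[OF sg lift_path[OF sg pA zz_ok]])
  show h: "hd (rev (lift (zz (\<not>sa)) A)) = br!2" using ne lA
    by (simp add: hd_rev last_lift br_def zz_def sa_def) (cases sc; auto)
  show l: "last (rev (lift (zz (\<not>sa)) A)) = br!3" using ne hA
    by (simp add: last_rev hd_lift br_def zz_def)
  show "set (rev (lift (zz (\<not>sa)) A)) \<inter> ({a,b,c} \<times> UNIV) = {br!2, br!3}"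
    using lift_ends[OF dist(1) ne(1) eA, of "zz (\<not>sa)"] h l by (auto simp: hd_rev last_rev)
qed

lemma g24: "good q24 (br!2) (br!4)"
  unfolding good_def q24_def
proof (intro conjI)
  show "path_in (shadow_V V) (shadow_E V E) (lift (zz sc) B)" by (rule lift_path[OF sg pB zz_ok])
  show h: "hd (lift (zz sc) B) = br!2" using ne hB by (simp add: hd_lift br_def zz_def)
  show l: "last (lift (zz sc) B) = br!4" using ne lB by (simp add: last_lift br_def zz_def sc_def)
  show "set (lift (zz sc) B) \<inter> ({a,b,c} \<times> UNIV) = {br!2, br!4}"
    using lift_ends[OF dist(2) ne(2) eB, of "zz sc"] h l by simp
qed

lemma g15: "good q15 (br!1) (br!5)"
  unfolding good_def q15_def
proof (intro conjI)
  show "path_in (shadow_V V) (shadow_E V E) (rev (lift (zz (\<not>sc)) B))"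
    by (rule rev_path_S[OF sg lift_path[OF sg pB zz_ok]])
  show h: "hd (rev (lift (zz (\<not>sc)) B)) = br!1" using ne lB
    by (simp add: hd_rev last_lift br_def zz_def sc_def)
  show l: "last (rev (lift (zz (\<not>sc)) B)) = br!5" using ne hB
    by (simp add: last_rev hd_lift br_def zz_def)
  show "set (rev (lift (zz (\<not>sc)) B)) \<inter> ({a,b,c} \<times> UNIV) = {br!1, br!5}"
    using lift_ends[OF dist(2) ne(2) eB, of "zz (\<not>sc)"] h l by (auto simp: hd_rev last_rev)
qed

lemma g13: "good q13 (br!1) (br!3)"
  unfolding good_def q13_def
proof (intro conjI)
  show "path_in (shadow_V V) (shadow_E V E) (rev (lift (\<lambda>i. i = 0 \<and> \<not>sa) R))"
    by (rule rev_path_S[OF sg lift_path[OF sg pR]]) simp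
  show h: "hd (rev (lift (\<lambda>i. i = 0 \<and> \<not>sa) R)) = br!1" using ne lR lenR
    by (simp add: hd_rev last_lift br_def)
  show l: "last (rev (lift (\<lambda>i. i = 0 \<and> \<not>sa) R)) = br!3" using ne hR
    by (simp add: last_rev hd_lift br_def)
  show "set (rev (lift (\<lambda>i. i = 0 \<and> \<not>sa) R)) \<inter> ({a,b,c} \<times> UNIV) = {br!1, br!3}"
    using lift_ends[OF dist(3) ne(3) eR, of "\<lambda>i. i = 0 \<and> \<not>sa"] h l by (auto simp: hd_rev last_rev)
qed

lemma g04: "good q04 (br!0) (br!4)"
  unfolding good_def q04_def
proof (intro conjI)
  have dne: "Dp \<noteq> []" using pDp by (simp add: path_in_def)
  show "path_in (shadow_V V) (shadow_E V E) (lift (\<lambda>i. (i = 0 \<and> sa) \<or> i = length Dp - 1) Dp)"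
    by (rule lift_path[OF sg pDp]) (use lenDp in auto)
  show h: "hd (lift (\<lambda>i. (i = 0 \<and> sa) \<or> i = length Dp - 1) Dp) = br!0" using dne hDp lenDp
    by (simp add: hd_lift br_def)
  show l: "last (lift (\<lambda>i. (i = 0 \<and> sa) \<or> i = length Dp - 1) Dp) = br!4" using dne lDp
    by (simp add: last_lift br_def)
  show "set (lift (\<lambda>i. (i = 0 \<and> sa) \<or> i = length Dp - 1) Dp) \<inter> ({a,b,c} \<times> UNIV) = {br!0, br!4}"
    using lift_ends[OF dDp dne eDp, of "\<lambda>i. (i = 0 \<and> sa) \<or> i = length Dp - 1"] h l by simp
qed

lemma gQ: assumes "u < 3" "3 \<le> v" "v < 6" shows "good (Q0 u v) (br!u) (br!v)"
proof -
  have "u = 0 \<or> u = 1 \<or> u = 2" "v = 3 \<or> v = 4 \<or> v = 5" using assms by auto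
  then show ?thesis using g03 g14 g25 g05 g23 g24 g15 g13 g04
    by (elim disjE) (simp_all add: Q0_def)
qed


lemma sp: "set q05 \<subseteq> set A \<times> UNIV" "set q23 \<subseteq> set A \<times> UNIV"
  "set q24 \<subseteq> set B \<times> UNIV" "set q15 \<subseteq> set B \<times> UNIV"
  "set q13 \<subseteq> set R \<times> UNIV" "set q04 \<subseteq> set Dp \<times> UNIV"
  unfolding q05_def q23_def q24_def q15_def q13_def q04_def by (simp_all add: set_lift_sub)

lemma dj: "set q05 \<inter> set q23 = {}" "set q24 \<inter> set q15 = {}"
  unfolding q05_def q23_def q24_def q15_def
  by (auto intro!: lift_disj dist simp: zz_def)

lemma si: "set A \<inter> set B \<subseteq> {a,b,c}" "set A \<inter> set R \<subseteq> {a,b,c}" "set A \<inter> set Dp \<subseteq> {a,b,c}"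
  "set B \<inter> set R \<subseteq> {a,b,c}" "set B \<inter> set Dp \<subseteq> {a,b,c}" "set R \<inter> set Dp \<subseteq> {a,b,c}"
proof -
  have h: "\<And>S T W Z. S \<inter> T \<subseteq> W \<Longrightarrow> S \<inter> W \<subseteq> Z \<Longrightarrow> S \<inter> T \<subseteq> Z" by blast
  have a: "set A \<inter> {a,b,c,d} \<subseteq> {a,b,c}" using wA by simp
  have b: "set B \<inter> {a,b,c,d} \<subseteq> {a,b,c}" using wB by simp
  have r: "set R \<inter> {a,b,c,d} \<subseteq> {a,b,c}" using wR by simp
  show "set A \<inter> set B \<subseteq> {a,b,c}" by (rule h[OF iAB a])
  show "set A \<inter> set R \<subseteq> {a,b,c}" by (rule h[OF iAR a])
  show "set A \<inter> set Dp \<subseteq> {a,b,c}" unfolding sDp Int_Un_distrib using h[OF iAD1 a] h[OF iAD2 a] by simp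
  show "set B \<inter> set R \<subseteq> {a,b,c}" by (rule h[OF iBR b])
  show "set B \<inter> set Dp \<subseteq> {a,b,c}" unfolding sDp Int_Un_distrib using h[OF iBD1 b] h[OF iBD2 b] by simp
  show "set R \<inter> set Dp \<subseteq> {a,b,c}" unfolding sDp Int_Un_distrib using h[OF iRD1 r] h[OF iRD2 r] by simp
qed

lemma pairs:
  "set q05 \<inter> set q24 \<subseteq> {a,b,c} \<times> UNIV"
  "set q05 \<inter> set q15 \<subseteq> {a,b,c} \<times> UNIV"
  "set q05 \<inter> set q13 \<subseteq> {a,b,c} \<times> UNIV"
  "set q05 \<inter> set q04 \<subseteq> {a,b,c} \<times> UNIV"
  "set q23 \<inter> set q24 \<subseteq> {a,b,c} \<times> UNIV"
  "set q23 \<inter> set q15 \<subseteq> {a,b,c} \<times> UNIV"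
  "set q23 \<inter> set q13 \<subseteq> {a,b,c} \<times> UNIV"
  "set q23 \<inter> set q04 \<subseteq> {a,b,c} \<times> UNIV"
  "set q24 \<inter> set q13 \<subseteq> {a,b,c} \<times> UNIV"
  "set q24 \<inter> set q04 \<subseteq> {a,b,c} \<times> UNIV"
  "set q15 \<inter> set q13 \<subseteq> {a,b,c} \<times> UNIV"
  "set q15 \<inter> set q04 \<subseteq> {a,b,c} \<times> UNIV"
  "set q13 \<inter> set q04 \<subseteq> {a,b,c} \<times> UNIV"
  "set q05 \<inter> set q23 \<subseteq> {a,b,c} \<times> UNIV" "set q24 \<inter> set q15 \<subseteq> {a,b,c} \<times> UNIV"
proof -
  show "set q05 \<inter> set q24 \<subseteq> {a,b,c} \<times> UNIV" by (rule supp_combine[OF sp(1) sp(3) si(1)])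
  show "set q05 \<inter> set q15 \<subseteq> {a,b,c} \<times> UNIV" by (rule supp_combine[OF sp(1) sp(4) si(1)])
  show "set q05 \<inter> set q13 \<subseteq> {a,b,c} \<times> UNIV" by (rule supp_combine[OF sp(1) sp(5) si(2)])
  show "set q05 \<inter> set q04 \<subseteq> {a,b,c} \<times> UNIV" by (rule supp_combine[OF sp(1) sp(6) si(3)])
  show "set q23 \<inter> set q24 \<subseteq> {a,b,c} \<times> UNIV" by (rule supp_combine[OF sp(2) sp(3) si(1)])
  show "set q23 \<inter> set q15 \<subseteq> {a,b,c} \<times> UNIV" by (rule supp_combine[OF sp(2) sp(4) si(1)])
  show "set q23 \<inter> set q13 \<subseteq> {a,b,c} \<times> UNIV" by (rule supp_combine[OF sp(2) sp(5) si(2)])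
  show "set q23 \<inter> set q04 \<subseteq> {a,b,c} \<times> UNIV" by (rule supp_combine[OF sp(2) sp(6) si(3)])
  show "set q24 \<inter> set q13 \<subseteq> {a,b,c} \<times> UNIV" by (rule supp_combine[OF sp(3) sp(5) si(4)])
  show "set q24 \<inter> set q04 \<subseteq> {a,b,c} \<times> UNIV" by (rule supp_combine[OF sp(3) sp(6) si(5)])
  show "set q15 \<inter> set q13 \<subseteq> {a,b,c} \<times> UNIV" by (rule supp_combine[OF sp(4) sp(5) si(4)])
  show "set q15 \<inter> set q04 \<subseteq> {a,b,c} \<times> UNIV" by (rule supp_combine[OF sp(4) sp(6) si(5)])
  show "set q13 \<inter> set q04 \<subseteq> {a,b,c} \<times> UNIV" by (rule supp_combine[OF sp(5) sp(6) si(6)])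
  show "set q05 \<inter> set q23 \<subseteq> {a,b,c} \<times> UNIV" "set q24 \<inter> set q15 \<subseteq> {a,b,c} \<times> UNIV" using dj by simp_all
qed

lemma pairs2: "X \<inter> Y \<subseteq> Z \<Longrightarrow> Y \<inter> X \<subseteq> Z" by blast

lemma stubs: "set (Q0 0 3) \<subseteq> {a,b,c} \<times> UNIV" "set (Q0 1 4) \<subseteq> {a,b,c} \<times> UNIV"
   "set (Q0 2 5) \<subseteq> {a,b,c} \<times> UNIV"
  by (auto simp: Q0_def)

lemma stub_int: "X \<subseteq> Z \<Longrightarrow> X \<inter> Y \<subseteq> Z" "X \<subseteq> Z \<Longrightarrow> Y \<inter> X \<subseteq> Z" by blast+

lemma dQ: assumes "u < 3" "3 \<le> v" "v < 6" "x < 3" "3 \<le> y" "y < 6" "(u,v) \<noteq> (x,y)"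
  shows "set (Q0 u v) \<inter> set (Q0 x y) \<subseteq> {a,b,c} \<times> UNIV"
proof -
  note P = pairs pairs2[OF pairs(1)] pairs2[OF pairs(2)] pairs2[OF pairs(3)]
    pairs2[OF pairs(4)] pairs2[OF pairs(5)] pairs2[OF pairs(6)] pairs2[OF pairs(7)] pairs2[OF pairs(8)]
    pairs2[OF pairs(9)] pairs2[OF pairs(10)] pairs2[OF pairs(11)] pairs2[OF pairs(12)] pairs2[OF pairs(13)]
    pairs2[OF pairs(14)] pairs2[OF pairs(15)]
  have Q: "Q0 0 5 = q05" "Q0 2 3 = q23" "Q0 2 4 = q24" "Q0 1 5 = q15" "Q0 1 3 = q13" "Q0 0 4 = q04"
    by (simp_all add: Q0_def)
  note S = stub_int[OF stubs(1)] stub_int[OF stubs(2)] stub_int[OF stubs(3)]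
  have "u = 0 \<or> u = 1 \<or> u = 2" "v = 3 \<or> v = 4 \<or> v = 5" "x = 0 \<or> x = 1 \<or> x = 2" "y = 3 \<or> y = 4 \<or> y = 5"
    using assms by auto
  then show ?thesis using assms(7)
    by (elim disjE; simp only: Q P S prod.inject simp_thms; simp)
qed


definition Q :: "nat \<Rightarrow> nat \<Rightarrow> ('a \<times> bool) list" where
  "Q u v = (if u < v then Q0 u v else rev (Q0 v u))"

lemma K33V: "K33_V = {0,1,2,3,4,5}" by (auto simp: K33_V_def)

lemma img: "(\<lambda>i. br!i) ` K33_V = {a,b,c} \<times> UNIV"
proof
  show "(\<lambda>i. br!i) ` K33_V \<subseteq> {a,b,c} \<times> UNIV" by (auto simp: K33V br_def)
  show "{a,b,c} \<times> UNIV \<subseteq> (\<lambda>i. br!i) ` K33_V"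
  proof
    fix z assume "z \<in> {a,b,c} \<times> (UNIV :: bool set)"
    then obtain x t where z: "z = (x,t)" "x \<in> {a,b,c}" by auto
    have "z \<in> set br" using z by (cases t; cases sa; cases sc) (auto simp: br_def)
    then obtain i where i: "i < length br" "z = br!i" by (metis in_set_conv_nth)
    have "length br = 6" by (simp add: br_def)
    with i have "i < 6" "z = br!i" by auto
    then show "z \<in> (\<lambda>i. br!i) ` K33_V" by (auto simp: K33_V_def)
  qed
qed

lemma edge: assumes "K33_E u v"
  shows "path_in (shadow_V V) (shadow_E V E) (Q u v) \<and> hd (Q u v) = br!u \<and> last (Q u v) = br!v
    \<and> Q v u = rev (Q u v) \<and> set (Q u v) \<inter> ((\<lambda>i. br!i) ` K33_V) = {br!u, br!v}"
proof -
  have "(u<3 \<and> 3 \<le> v \<and> v<6) \<or> (v<3 \<and> 3\<le>u \<and> u<6)" using assms by (auto simp: K33_E_def)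
  then show ?thesis
  proof
    assume h: "u<3 \<and> 3 \<le> v \<and> v<6"
    then have g: "good (Q0 u v) (br!u) (br!v)" using gQ by auto
    have "Q u v = Q0 u v" "Q v u = rev (Q0 u v)" using h by (auto simp: Q_def)
    then show ?thesis using g unfolding good_def img by simp
  next
    assume h: "v<3 \<and> 3 \<le> u \<and> u<6"
    then have g: "good (Q0 v u) (br!v) (br!u)" using gQ by auto
    have "Q u v = rev (Q0 v u)" "Q v u = Q0 v u" using h by (auto simp: Q_def)
    then show ?thesis using g rev_path_S[OF sg] unfolding good_def img
      by (auto simp: hd_rev last_rev)
  qed
qed

lemma setQ: "u \<noteq> v \<Longrightarrow> set (Q u v) = set (Q0 (min u v) (max u v))"
  by (cases "u < v") (auto simp: Q_def min_def max_def)

lemma disj: assumes "K33_E u v" "K33_E x y" "{u,v} \<noteq> {x,y}"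
  shows "set (Q u v) \<inter> set (Q x y) \<subseteq> (\<lambda>i. br!i) ` K33_V"
proof -
  have uv: "u \<noteq> v" "min u v < 3" "3 \<le> max u v" "max u v < 6" using assms(1) by (auto simp: K33_E_def)
  have xy: "x \<noteq> y" "min x y < 3" "3 \<le> max x y" "max x y < 6" using assms(2) by (auto simp: K33_E_def)
  have mm: "\<And>p q :: nat. {p,q} = {min p q, max p q}" by (auto simp: min_def max_def)
  have ne: "(min u v, max u v) \<noteq> (min x y, max x y)"
    using assms(3) mm[of u v] mm[of x y] by auto
  show ?thesis unfolding setQ[OF uv(1)] setQ[OF xy(1)] img
    by (rule dQ[OF uv(2-4) xy(2-4) ne])
qed

lemma main: "has_subdivision K33_V K33_E (shadow_V V) (shadow_E V E)"
  unfolding has_subdivision_def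
proof (rule exI[where x="\<lambda>i. br!i"], rule exI[where x="Q"], intro conjI)
  show "inj_on (\<lambda>i. br!i) K33_V" unfolding inj_on_def K33V using dab dac dbc by (auto simp: br_def)
  show "(\<lambda>i. br!i) ` K33_V \<subseteq> shadow_V V" unfolding img shadow_V_def using inV by auto
  show "\<forall>u v. K33_E u v \<longrightarrow> path_in (shadow_V V) (shadow_E V E) (Q u v) \<and> hd (Q u v) = br!u
     \<and> last (Q u v) = br!v \<and> Q v u = rev (Q u v) \<and> set (Q u v) \<inter> (\<lambda>i. br!i) ` K33_V = {br!u, br!v}"
    using edge by blast
  show "\<forall>u v x y. K33_E u v \<and> K33_E x y \<and> {u, v} \<noteq> {x, y} \<longrightarrow>
     set (Q u v) \<inter> set (Q x y) \<subseteq> (\<lambda>i. br!i) ` K33_V"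
    using disj by blast
qed

end

theorem lemma5p5:
  fixes V :: "'a set" and E :: "'a \<Rightarrow> 'a \<Rightarrow> bool"
  assumes "simple_graph V E"
    and "has_subdivision K4m_V K4m_E V E"
  shows "has_subdivision K33_V K33_E (shadow_V V) (shadow_E V E)"
proof -
  obtain f P where inj: "inj_on f K4m_V" and fV: "f ` K4m_V \<subseteq> V"
    and pe: "\<forall>u v. K4m_E u v \<longrightarrow> path_in V E (P u v) \<and> hd (P u v) = f u \<and> last (P u v) = f v
             \<and> P v u = rev (P u v) \<and> set (P u v) \<inter> f ` K4m_V = {f u, f v}"
    and pd: "\<forall>u v x y. K4m_E u v \<and> K4m_E x y \<and> {u, v} \<noteq> {x, y} \<longrightarrow>
             set (P u v) \<inter> set (P x y) \<subseteq> f ` K4m_V"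
    using assms(2) unfolding has_subdivision_def by blast
  have KV: "K4m_V = {0,1,2,3}" by (auto simp: K4m_V_def)
  have W: "f ` K4m_V = {f 0, f 1, f 2, f 3}" by (simp add: KV)
  have e: "K4m_E 0 2" "K4m_E 2 1" "K4m_E 0 1" "K4m_E 0 3" "K4m_E 3 1"
    by (simp_all add: K4m_E_def K4m_V_def doubleton_eq_iff)
  have d: "f 0 \<noteq> f 1" "f 0 \<noteq> f 2" "f 0 \<noteq> f 3" "f 1 \<noteq> f 2" "f 1 \<noteq> f 3" "f 2 \<noteq> f 3"
    using inj unfolding inj_on_def KV by fastforce+
  have p02: "path_in V E (P 0 2)" "hd (P 0 2) = f 0" "last (P 0 2) = f 2"
      "set (P 0 2) \<inter> {f 0, f 1, f 2, f 3} = {f 0, f 2}"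
    using pe e(1) unfolding W by blast+
  have p21: "path_in V E (P 2 1)" "hd (P 2 1) = f 2" "last (P 2 1) = f 1"
      "set (P 2 1) \<inter> {f 0, f 1, f 2, f 3} = {f 2, f 1}"
    using pe e(2) unfolding W by blast+
  have p01: "path_in V E (P 0 1)" "hd (P 0 1) = f 0" "last (P 0 1) = f 1"
      "set (P 0 1) \<inter> {f 0, f 1, f 2, f 3} = {f 0, f 1}"
    using pe e(3) unfolding W by blast+
  have p03: "path_in V E (P 0 3)" "hd (P 0 3) = f 0" "last (P 0 3) = f 3"
      "set (P 0 3) \<inter> {f 0, f 1, f 2, f 3} = {f 0, f 3}"
    using pe e(4) unfolding W by blast+
  have p31: "path_in V E (P 3 1)" "hd (P 3 1) = f 3" "last (P 3 1) = f 1"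
      "set (P 3 1) \<inter> {f 0, f 1, f 2, f 3} = {f 3, f 1}"
    using pe e(5) unfolding W by blast+
  have i: "\<And>u v x y. K4m_E u v \<Longrightarrow> K4m_E x y \<Longrightarrow> {u, v} \<noteq> {x, y} \<Longrightarrow>
             set (P u v) \<inter> set (P x y) \<subseteq> {f 0, f 1, f 2, f 3}"
    using pd unfolding W by blast
  have ne: "{0::nat,2} \<noteq> {2,1}" "{0::nat,2} \<noteq> {0,1}" "{0::nat,2} \<noteq> {0,3}" "{0::nat,2} \<noteq> {3,1}"
    "{2::nat,1} \<noteq> {0,1}" "{2::nat,1} \<noteq> {0,3}" "{2::nat,1} \<noteq> {3,1}"
    "{0::nat,1} \<noteq> {0,3}" "{0::nat,1} \<noteq> {3,1}" "{0::nat,3} \<noteq> {3,1}"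
    by (simp_all add: doubleton_eq_iff)
  interpret diam V E "f 0" "f 1" "f 2" "f 3" "P 0 2" "P 2 1" "P 0 1" "P 0 3" "P 3 1"
    apply unfold_locales
    apply (simp_all only: d p02 p21 p01 p03 p31 assms(1) not_False_eq_True)
    apply (rule i; (rule e | rule ne))+
    done
  show ?thesis by (rule main)
qed

end
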